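(* For all integers $n\ge 3$ and $k\ge 1$, $\mathrm{mur}(kC_n)=kn-2k-1$, where $kC_n$ is the vertex-disjoint union of $k$ copies of the cycle $C_n$ on $n$ vertices.
   Context: For a finite simple undirected graph $G$ on vertices $v_1,\dots,v_n$, let $A_G$ be its $(0,1)$-adjacency matrix, $D_G=\mathrm{diag}(d_1,\dots,d_n)$ with $d_i$ the degree of $v_i$, $I$ the $n\times n$ identity matrix and $J$ the $n\times n$ all-ones matrix. A universal adjacency matrix of $G$ is any matrix $\alpha A_G+\beta I+\gamma J+\delta D_G$ with real scalars $\alpha,\beta,\gamma,\delta$ and $\alpha\neq 0$. The minimum universal rank $\mathrm{mur}(G)$ is the minimum rank over all universal adjacency matrices of $G$. *)

theory Defs
  imports "Jordan_Normal_Form.DL_Rank"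
begin

text \<open>A finite simple graph on vertex set {0..<N} given by a symmetric, irreflexive
adjacency predicate (only its values on {0..<N} matter).\<close>

definition adjacency_mat :: "nat \<Rightarrow> (nat \<Rightarrow> nat \<Rightarrow> bool) \<Rightarrow> real mat" where
  "adjacency_mat N adj = mat N N (\<lambda>(i, j). if adj i j then 1 else 0)"

definition degree :: "nat \<Rightarrow> (nat \<Rightarrow> nat \<Rightarrow> bool) \<Rightarrow> nat \<Rightarrow> nat" where
  "degree N adj i = card {j. j < N \<and> adj i j}"

definition degree_mat :: "nat \<Rightarrow> (nat \<Rightarrow> nat \<Rightarrow> bool) \<Rightarrow> real mat" where
  "degree_mat N adj = mat N N (\<lambda>(i, j). if i = j then real (degree N adj i) else 0)"

definition all_ones_mat :: "nat \<Rightarrow> real mat" where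
  "all_ones_mat N = mat N N (\<lambda>_. 1)"

definition universal_adj_mat ::
  "nat \<Rightarrow> (nat \<Rightarrow> nat \<Rightarrow> bool) \<Rightarrow> real \<Rightarrow> real \<Rightarrow> real \<Rightarrow> real \<Rightarrow> real mat" where
  "universal_adj_mat N adj \<alpha> \<beta> \<gamma> \<delta> =
     \<alpha> \<cdot>\<^sub>m adjacency_mat N adj + \<beta> \<cdot>\<^sub>m 1\<^sub>m N + \<gamma> \<cdot>\<^sub>m all_ones_mat N + \<delta> \<cdot>\<^sub>m degree_mat N adj"

definition mur :: "nat \<Rightarrow> (nat \<Rightarrow> nat \<Rightarrow> bool) \<Rightarrow> nat" where
  "mur N adj = (LEAST r. \<exists>\<alpha> \<beta> \<gamma> \<delta>. \<alpha> \<noteq> 0 \<and>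
       vec_space.rank N (universal_adj_mat N adj \<alpha> \<beta> \<gamma> \<delta>) = r)"

text \<open>kC_n: vertex i < k*n lies in copy i div n at position i mod n of a cycle C_n.\<close>
definition kCn_adj :: "nat \<Rightarrow> nat \<Rightarrow> nat \<Rightarrow> nat \<Rightarrow> bool" where
  "kCn_adj k n i j \<longleftrightarrow> i < k * n \<and> j < k * n \<and> i div n = j div n \<and>
     (j mod n = (i mod n + 1) mod n \<or> i mod n = (j mod n + 1) mod n)"

end

theory Submission
  imports Defs
begin


lemma (in vec_space) rank_le_span_cols:
  assumes A: "A \<in> carrier_mat n nc" and P: "P \<in> carrier_mat n m"
  and sub: "set (cols A) \<subseteq> span (set (cols P))"
  shows "rank A \<le> m"
proof -
  have Pc: "set (cols P) \<subseteq> carrier_vec n" using P cols_dim by blast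
  have vs: "vectorspace class_ring (vs (span (set (cols P))))" using span_is_subspace[THEN subspace_is_vs, OF Pc] by auto
  have sm: "submodule class_ring (span (set (cols P))) V" using span_is_submodule Pc by simp
  have ss: "subspace class_ring (span (set (cols A))) (vs (span (set (cols P))))"
    using vectorspace.span_is_subspace[OF vs, of "set (cols A)", unfolded span_li_not_depend(1)[OF sub sm]] sub by auto
  have fd: "vectorspace.fin_dim class_ring (vs (span (set (cols P))))"
       "vectorspace.fin_dim class_ring (vs (span (set (cols P)))\<lparr>carrier := span (set (cols A))\<rparr>)"
    using fin_dim_span_cols A P by auto
  have "rank A \<le> rank P" unfolding rank_def using vectorspace.subspace_dim[OF vs ss fd] by simp
  also have "... \<le> m" using rank_le_nc P by auto
  finally show ?thesis .
qed



lemma (in vec_space) mult_in_span_cols: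
  assumes A: "A \<in> carrier_mat n n" and v: "v \<in> carrier_vec n"
  and F: "distinct F" "{j. j < n \<and> v $ j \<noteq> 0} \<subseteq> set F" "set F \<subseteq> {..<n}"
  shows "A *\<^sub>v v \<in> span (set (map (col A) F))"
proof -
  have W: "set (map (col A) F) \<subseteq> carrier_vec n" using A F(3) by auto
  have eq: "A *\<^sub>v v = sumlist (map (\<lambda>j. v $ j \<cdot>\<^sub>v col A j) F)"
  proof (rule eq_vecI)
    show d: "dim_vec (A *\<^sub>v v) = dim_vec (sumlist (map (\<lambda>j. v $ j \<cdot>\<^sub>v col A j) F))"
      using A by (subst dim_sumlist, auto)
    fix i assume "i < dim_vec (sumlist (map (\<lambda>j. v $ j \<cdot>\<^sub>v col A j) F))"
    then have i: "i < n" using d A by auto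
    have "sumlist (map (\<lambda>j. v $ j \<cdot>\<^sub>v col A j) F) $ i
       = (\<Sum>t\<in>{0..<length F}. v $ (F ! t) * A $$ (i, F ! t))"
    proof -
      have "\<And>t. t < length F \<Longrightarrow> F ! t < n" using F(3) nth_mem by blast
      then show ?thesis using i A F(3) by (subst sumlist_nth, auto intro!: sum.cong)
    qed
    also have "\<dots> = sum_list (map (\<lambda>j. v $ j * A $$ (i, j)) F)"
      by (simp add: sum_list_sum_nth atLeast0LessThan)
    also have "\<dots> = (\<Sum>j\<in>set F. v $ j * A $$ (i, j))"
      using F(1) by (simp add: sum_list_distinct_conv_sum_set)
    also have "\<dots> = (\<Sum>j\<in>{0..<n}. v $ j * A $$ (i, j))"
      by (rule sum.mono_neutral_left, insert F, auto)
    also have "\<dots> = (A *\<^sub>v v) $ i"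
      using A v i by (auto simp: scalar_prod_def mult.commute intro!: sum.cong)
    finally show "(A *\<^sub>v v) $ i = sumlist (map (\<lambda>j. v $ j \<cdot>\<^sub>v col A j) F) $ i" by simp
  qed
  show ?thesis unfolding eq
  proof (rule sumlist_in_span[OF W])
    fix x assume "x \<in> set (map (\<lambda>j. v $ j \<cdot>\<^sub>v col A j) F)"
    then obtain j where j: "j \<in> set F" "x = v $ j \<cdot>\<^sub>v col A j" by auto
    have "col A j \<in> span (set (map (col A) F))" using j(1) span_mem[OF W] by auto
    then show "x \<in> span (set (map (col A) F))" using j(2) smult_in_span[OF W] by auto
  qed
qed

lemma (in vec_space) rank_le_kernel_elim:
  assumes A: "A \<in> carrier_mat n n" and E: "E \<subseteq> {..<n}"
  and w: "\<And>c. c \<in> E \<Longrightarrow> w c \<in> carrier_vec n \<and> A *\<^sub>v w c = 0\<^sub>v n \<and> w c $ c = 1 \<and> (\<forall>c'\<in>E. c' \<noteq> c \<longrightarrow> w c $ c' = 0)"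
  shows "rank A \<le> n - card E"
proof -
  define F where "F = filter (\<lambda>j. j \<notin> E) [0..<n]"
  have Fd: "distinct F" and Fs: "set F = {j. j < n \<and> j \<notin> E}" unfolding F_def by auto
  have lenF: "length F = n - card E"
  proof -
    have "length F = card ({j. j \<notin> E} \<inter> {0..<n})" unfolding F_def by (simp add: distinct_length_filter)
    also have "{j. j \<notin> E} \<inter> {0..<n} = {0..<n} - E" by auto
    also have "card \<dots> = n - card E" using E by (subst card_Diff_subset, auto intro: finite_subset)
    finally show ?thesis .
  qed
  define P where "P = mat_of_cols n (map (col A) F)"
  have W: "set (map (col A) F) \<subseteq> carrier_vec n"
  proof -
    have "\<And>j. col A j \<in> carrier_vec n" using A by (metis carrier_matD(1) carrier_vecI dim_col)
    then show ?thesis unfolding set_map by blast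
  qed
  have P: "P \<in> carrier_mat n (n - card E)" unfolding P_def using mat_of_cols_carrier(1)[of n "map (col A) F"] unfolding length_map lenF .
  have cP: "set (cols P) = set (map (col A) F)" unfolding P_def by (rule arg_cong[where f=set, OF cols_mat_of_cols[OF W]])
  have "set (cols A) \<subseteq> span (set (cols P))"
  proof
    fix x assume "x \<in> set (cols A)"
    then obtain c where c: "c < n" "x = col A c" using A by (auto simp: in_set_conv_nth)
    show "x \<in> span (set (cols P))"
    proof (cases "c \<in> E")
      case False
      then have "x \<in> set (cols P)" unfolding cP using c Fs by auto
      then show ?thesis using W cP span_mem by auto
    next
      case True
      note wc = w[OF True]
      define u where "u = unit_vec n c - w c"
      have u: "u \<in> carrier_vec n" unfolding u_def using wc by auto
      have "A *\<^sub>v u = A *\<^sub>v unit_vec n c - A *\<^sub>v w c" unfolding u_def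
        using A wc by (subst mult_minus_distrib_mat_vec, auto)
      also have "\<dots> = A *\<^sub>v unit_vec n c" using wc A by auto
      also have "\<dots> = x" using A c by (auto intro!: eq_vecI simp: scalar_prod_right_unit)
      finally have x: "x = A *\<^sub>v u" by simp
      have "A *\<^sub>v u \<in> span (set (map (col A) F))"
      proof (rule mult_in_span_cols[OF A u Fd])
        show "set F \<subseteq> {..<n}" using Fs by auto
        show "{j. j < n \<and> u $ j \<noteq> 0} \<subseteq> set F"
        proof -
          have "j \<in> set F" if "j < n" "u $ j \<noteq> 0" for j
          proof -
            have "j \<notin> E"
            proof
              assume jE: "j \<in> E"
              have "u $ j = (if j = c then 1 else 0) - w c $ j" unfolding u_def using that wc by (auto simp: unit_vec_def)
              also have "\<dots> = 0" using wc jE True by auto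
              finally show False using that by simp
            qed
            then show ?thesis using Fs that by auto
          qed
          then show ?thesis by auto
        qed
      qed
      then show ?thesis using x cP by simp
    qed
  qed
  then show ?thesis using rank_le_span_cols[OF A P] by simp
qed



definition nbp :: "nat \<Rightarrow> nat \<Rightarrow> nat" where "nbp n i = (i div n)*n + (i mod n + 1) mod n"
definition nbm :: "nat \<Rightarrow> nat \<Rightarrow> nat" where "nbm n i = (i div n)*n + (i mod n + n - 1) mod n"

lemma lt_block: assumes "b < k" "r < (n::nat)" shows "b*n + r < k*n"
proof -
  have "b*n + r < (b+1)*n" using assms by simp
  also have "\<dots> \<le> k*n" using assms by (intro mult_right_mono, auto)
  finally show ?thesis .
qed

lemma nb_props: assumes n: "n \<ge> 3" and i: "i < k*n"
  shows "nbp n i < k*n" "nbm n i < k*n" "nbp n i div n = i div n" "nbm n i div n = i div n"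
   "nbp n i mod n = (i mod n + 1) mod n" "nbm n i mod n = (i mod n + n - 1) mod n" "nbp n i \<noteq> nbm n i"
proof -
  have n0: "n > 0" using n by auto
  have b: "i div n < k" using i n0 by (simp add: div_less_iff_less_mult mult.commute)
  show "nbp n i < k*n" unfolding nbp_def using b n0 by (intro lt_block, auto)
  show "nbm n i < k*n" unfolding nbm_def using b n0 by (intro lt_block, auto)
  show "nbp n i div n = i div n" "nbp n i mod n = (i mod n + 1) mod n" unfolding nbp_def using n0 by auto
  show "nbm n i div n = i div n" "nbm n i mod n = (i mod n + n - 1) mod n" unfolding nbm_def using n0 by auto
  have "(i mod n + 1) mod n \<noteq> (i mod n + n - 1) mod n"
  proof -
    have p: "i mod n < n" using n0 by auto
    consider "i mod n = 0" | "i mod n = n - 1" | "0 < i mod n \<and> i mod n < n - 1" using p by linarith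
    then show ?thesis
    proof cases
      case 1 then show ?thesis using n by auto
    next
      case 2
      then have "i mod n + 1 = n" using n by auto
      then have e1: "(i mod n + 1) mod n = 0" by simp
      have "i mod n + n - 1 = (n - 2) + n" using 2 n by auto
      then have "(i mod n + n - 1) mod n = (n - 2) mod n" by (simp only: mod_add_self2)
      also have "\<dots> = n - 2" using n by simp
      finally show ?thesis using e1 n by simp
    next
      case 3
      then have "(i mod n + 1) mod n = i mod n + 1" by auto
      moreover have "(i mod n + n - 1) = (i mod n - 1) + n" using 3 by auto
      then have "(i mod n + n - 1) mod n = (i mod n - 1) mod n" by (simp only: mod_add_self2)
      then have "(i mod n + n - 1) mod n = i mod n - 1" using 3 p by auto
      ultimately show ?thesis using 3 by auto
    qed
  qed
  then show "nbp n i \<noteq> nbm n i" unfolding nbp_def nbm_def by auto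
qed

lemma adj_iff: assumes n: "n \<ge> 3" and i: "i < k*n" and j: "j < k*n"
  shows "kCn_adj k n i j \<longleftrightarrow> j = nbp n i \<or> j = nbm n i"
proof -
  have n0: "n > 0" using n by auto
  have jdm: "j = (j div n)*n + j mod n" by simp
  define p where "p = i mod n"
  define q where "q = j mod n"
  have p: "p < n" and q: "q < n" unfolding p_def q_def using n0 by auto
  have key: "p = (q + 1) mod n \<longleftrightarrow> q = (p + n - 1) mod n"
  proof (cases "q + 1 < n")
    case True
    then have e: "(q+1) mod n = q + 1" by simp
    show ?thesis
    proof
      assume "p = (q + 1) mod n" then have "p = q + 1" using e by simp
      then have "p + n - 1 = q + n" by simp
      then show "q = (p + n - 1) mod n" using q by simp
    next
      assume h: "q = (p + n - 1) mod n"
      show "p = (q + 1) mod n"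
      proof (cases "p = 0")
        case True
        then have "q = n - 1" using h n by simp
        then show ?thesis using \<open>q + 1 < n\<close> by simp
      next
        case False
        then have "p + n - 1 = (p - 1) + n" by simp
        then have "(p + n - 1) mod n = ((p - 1) + n) mod n" by (simp only:)
        also have "\<dots> = (p - 1) mod n" by (simp only: mod_add_self2)
        also have "\<dots> = p - 1" using p by simp
        finally have "q = p - 1" using h by simp
        then show ?thesis using e False by simp
      qed
    qed
  next
    case False
    then have qn: "q = n - 1" using q by simp
    then have e: "(q+1) mod n = 0" using n by simp
    show ?thesis
    proof
      assume "p = (q + 1) mod n" then have "p = 0" using e by simp
      then show "q = (p + n - 1) mod n" using qn n by simp
    next
      assume h: "q = (p + n - 1) mod n"
      show "p = (q + 1) mod n"
      proof (cases "p = 0")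
        case True then show ?thesis using e by simp
      next
        case False
        then have "p + n - 1 = (p - 1) + n" by simp
        then have "(p + n - 1) mod n = ((p - 1) + n) mod n" by (simp only:)
        also have "\<dots> = (p - 1) mod n" by (simp only: mod_add_self2)
        also have "\<dots> = p - 1" using p by simp
        finally have "q = p - 1" using h by simp
        then show ?thesis using qn p False by arith
      qed
    qed
  qed
  have "kCn_adj k n i j \<longleftrightarrow> j div n = i div n \<and> (q = (p + 1) mod n \<or> q = (p + n - 1) mod n)"
    unfolding kCn_adj_def p_def[symmetric] q_def[symmetric] key using i j by auto
  also have "\<dots> \<longleftrightarrow> j = nbp n i \<or> j = nbm n i"
  proof
    assume h: "j div n = i div n \<and> (q = (p + 1) mod n \<or> q = (p + n - 1) mod n)"
    show "j = nbp n i \<or> j = nbm n i"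
    proof (cases "q = (p + 1) mod n")
      case True
      then have "j = (i div n)*n + (p + 1) mod n" using h unfolding q_def by (subst jdm, simp)
      then show ?thesis unfolding nbp_def p_def by simp
    next
      case False
      then have "j = (i div n)*n + (p + n - 1) mod n" using h unfolding q_def by (subst jdm, simp)
      then show ?thesis unfolding nbm_def p_def by simp
    qed
  next
    assume "j = nbp n i \<or> j = nbm n i"
    then show "j div n = i div n \<and> (q = (p + 1) mod n \<or> q = (p + n - 1) mod n)"
      using nb_props[OF n i] unfolding q_def p_def by auto
  qed
  finally show ?thesis .
qed

lemma sum_adj: assumes n: "n \<ge> 3" and i: "i < k*n"
  shows "(\<Sum>j<k*n. (if kCn_adj k n i j then 1 else 0) * f j) = f (nbp n i) + (f (nbm n i) :: real)"
proof -
  have "(\<Sum>j<k*n. (if kCn_adj k n i j then 1 else 0) * f j) = (\<Sum>j<k*n. if j \<in> {nbp n i, nbm n i} then f j else 0)"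
    by (rule sum.cong, auto simp: adj_iff[OF n i])
  also have "\<dots> = sum f ({..<k*n} \<inter> {nbp n i, nbm n i})" by (simp add: sum.inter_restrict)
  also have "{..<k*n} \<inter> {nbp n i, nbm n i} = {nbp n i, nbm n i}" using nb_props[OF n i] by auto
  also have "sum f \<dots> = f (nbp n i) + f (nbm n i)" using nb_props(7)[OF n i] by simp
  finally show ?thesis .
qed

lemma sin_nat_per: "sin (x + 2*pi*real (q::nat)) = sin x"
proof (induction q)
  case (Suc q)
  have "sin (x + 2*pi*real (Suc q)) = sin ((x + 2*pi*real q) + 2*pi)"
    by (rule arg_cong[where f=sin]) (simp add: algebra_simps)
  also have "\<dots> = sin x" using Suc by (simp only: sin_periodic)
  finally show ?case .
qed simp

lemma sin_mod: assumes "n > 0"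
  shows "sin (2*pi/real n * real (m mod n) + \<phi>) = sin (2*pi/real n * real m + \<phi>)"
proof -
  have "real m = real (m mod n) + real n * real (m div n)"
    by (metis of_nat_add of_nat_mult mod_mult_div_eq add.commute)
  then have "2*pi/real n * real m + \<phi> = (2*pi/real n * real (m mod n) + \<phi>) + 2*pi*real (m div n)"
    using assms by (simp add: field_simps)
  then have "sin (2*pi/real n * real m + \<phi>) = sin ((2*pi/real n * real (m mod n) + \<phi>) + 2*pi*real (m div n))"
    by (rule arg_cong)
  then show ?thesis using sin_nat_per by simp
qed

lemma trig2: "sin (a + t) + sin (a - t) = 2 * cos t * sin (a::real)"
  by (simp add: sin_add sin_diff)

lemma sin_rec: assumes n: "n \<ge> 3" and p: "p < n"
  shows "sin (2*pi/real n * real ((p+1) mod n) + \<phi>) + sin (2*pi/real n * real ((p+n-1) mod n) + \<phi>)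
       = 2 * cos (2*pi/real n) * sin (2*pi/real n * real p + \<phi>)"
proof -
  define t where "t = 2*pi/real n"
  have n0: "n > 0" using n by auto
  have tn: "t * real n = 2*pi" unfolding t_def using n0 by simp
  have a: "sin (t * real ((p+1) mod n) + \<phi>) = sin ((t*real p + \<phi>) + t)"
  proof -
    have "sin (t * real ((p+1) mod n) + \<phi>) = sin (t * real (p+1) + \<phi>)" unfolding t_def sin_mod[OF n0] ..
    also have "t * real (p+1) + \<phi> = (t*real p + \<phi>) + t" by (simp add: algebra_simps)
    finally show ?thesis .
  qed
  have "real (p+n-1) = real p + real n - 1" using n0 by auto
  then have "t * real (p+n-1) + \<phi> = (t*real p + \<phi> - t) + 2*pi" using tn by (simp add: algebra_simps)
  then have b: "sin (t * real ((p+n-1) mod n) + \<phi>) = sin ((t*real p + \<phi>) - t)"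
  proof -
    assume h: "t * real (p+n-1) + \<phi> = (t*real p + \<phi> - t) + 2*pi"
    have "sin (t * real ((p+n-1) mod n) + \<phi>) = sin (t * real (p+n-1) + \<phi>)" unfolding t_def sin_mod[OF n0] ..
    also have "\<dots> = sin ((t*real p + \<phi> - t) + 2*pi)" unfolding h ..
    also have "\<dots> = sin ((t*real p + \<phi>) - t)" by (simp only: sin_periodic)
    finally show ?thesis .
  qed
  show ?thesis unfolding t_def[symmetric] a b trig2 ..
qed

lemma cos_lt1: assumes n: "n \<ge> 3" shows "cos (2*pi/real n) < 1"
proof -
  have "0 < 2*pi/real n" using n by simp
  moreover have "2*pi/real n \<le> pi" using n by (simp add: field_simps)
  ultimately have "cos (2*pi/real n) < cos 0" by (intro cos_monotone_0_pi, auto)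
  then show ?thesis by simp
qed

lemma sin_pos: assumes n: "n \<ge> 3" shows "sin (2*pi/real n) > 0"
proof -
  have "0 < 2*pi/real n" using n by simp
  moreover have "2*pi/real n < pi" using n by (simp add: field_simps)
  ultimately show ?thesis by (rule sin_gt_zero)
qed

lemma sin_shift_sum: assumes n: "n \<ge> 3"
  shows "(\<Sum>p<n. sin (2*pi/real n * real (Suc p) + \<phi>)) = (\<Sum>p<n. sin (2*pi/real n * real p + \<phi>))"
proof -
  define f where "f p = sin (2*pi/real n * real p + \<phi>)" for p
  have fn: "f n = f 0" unfolding f_def using n sin_mod[of n n \<phi>] by simp
  have "(\<Sum>p<Suc n. f p) = f 0 + (\<Sum>p<n. f (Suc p))" by (rule sum.lessThan_Suc_shift)
  moreover have "(\<Sum>p<Suc n. f p) = (\<Sum>p<n. f p) + f n" by simp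
  ultimately show ?thesis using fn unfolding f_def by simp
qed

lemma sin_sum0: assumes n: "n \<ge> 3"
  shows "(\<Sum>p<n. sin (2*pi/real n * real p + \<phi>)) = 0"
proof -
  define t where "t = 2*pi/real n"
  define T where "T \<psi> = (\<Sum>p<n. sin (t * real p + \<psi>))" for \<psi>
  have shift: "T (\<psi> - t) = T \<psi>" for \<psi>
  proof -
    have "T (\<psi> - t) = (\<Sum>p<n. sin (t * real (Suc p) + (\<psi> - t)))"
      unfolding T_def t_def using sin_shift_sum[OF n, of "\<psi> - 2*pi/real n"] by simp
    also have "\<dots> = T \<psi>" unfolding T_def by (simp add: algebra_simps)
    finally show ?thesis .
  qed
  have "(\<Sum>p<n. sin (t * real (Suc p) + \<phi>) + sin (t * real p + (\<phi> - t))) = (\<Sum>p<n. 2 * cos t * sin (t*real p + \<phi>))"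
  proof (rule sum.cong)
    fix p assume "p \<in> {..<n}"
    show "sin (t * real (Suc p) + \<phi>) + sin (t * real p + (\<phi> - t)) = 2 * cos t * sin (t*real p + \<phi>)"
    proof -
      have "t * real (Suc p) + \<phi> = (t*real p + \<phi>) + t" "t * real p + (\<phi> - t) = (t*real p + \<phi>) - t" by (simp_all add: algebra_simps)
      then show ?thesis by (simp only: trig2)
    qed
  qed simp
  then have "T \<phi> + T (\<phi> - t) = 2 * cos t * T \<phi>"
    unfolding T_def sum.distrib sum_distrib_left[symmetric] using sin_shift_sum[OF n, of \<phi>] t_def by simp
  then have "2 * T \<phi> = 2 * cos t * T \<phi>" using shift by simp
  then have "(1 - cos t) * T \<phi> = 0" by (simp add: algebra_simps)
  moreover have "1 - cos t \<noteq> 0" using cos_lt1[OF n] unfolding t_def by simp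
  ultimately show ?thesis unfolding T_def t_def by simp
qed



definition th :: "nat \<Rightarrow> real" where "th n = 2*pi/real n"
definition sf :: "nat \<Rightarrow> real \<Rightarrow> nat \<Rightarrow> real" where "sf n \<phi> p = sin (th n * real p + \<phi>)"
definition kv :: "nat \<Rightarrow> real \<Rightarrow> (nat \<Rightarrow> real) \<Rightarrow> (nat \<Rightarrow> real) \<Rightarrow> nat \<Rightarrow> real" where
  "kv n a x y j = a + x (j div n) * sf n 0 (j mod n) + y (j div n) * sf n (- th n) (j mod n)"

lemma sf_rec: assumes "n \<ge> 3" "p < n"
  shows "sf n \<phi> ((p+1) mod n) + sf n \<phi> ((p+n-1) mod n) = 2 * cos (th n) * sf n \<phi> p"
  unfolding sf_def th_def using sin_rec[OF assms] .

lemma sf_sum0: assumes "n \<ge> 3" shows "(\<Sum>p<n. sf n \<phi> p) = 0"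
  unfolding sf_def th_def using sin_sum0[OF assms] .

lemma sum_lessThan_add: "(\<Sum>j<m+(n::nat). f j) = (\<Sum>j<m. f j) + (\<Sum>p<n. f (m+p))"
  by (induction n) (auto simp: add.assoc)

lemma sum_blocks: assumes "n > 0"
  shows "(\<Sum>j<(k::nat)*n. g (j div n) * h (j mod n)) = (\<Sum>b<k. g b) * (\<Sum>p<n. (h p :: real))"
proof (induction k)
  case (Suc k)
  have "(\<Sum>j<Suc k*n. g (j div n) * h (j mod n)) = (\<Sum>j<k*n + n. g (j div n) * h (j mod n))"
    by (simp add: add.commute)
  also have "\<dots> = (\<Sum>j<k*n. g (j div n) * h (j mod n)) + (\<Sum>p<n. g ((k*n+p) div n) * h ((k*n+p) mod n))"
    by (rule sum_lessThan_add)
  also have "(\<Sum>p<n. g ((k*n+p) div n) * h ((k*n+p) mod n)) = (\<Sum>p<n. g k * h p)"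
    using assms by (intro sum.cong, auto)
  finally show ?case using Suc by (simp add: sum_distrib_left distrib_right)
qed simp

lemma kv_sum: assumes "n \<ge> 3"
  shows "(\<Sum>j<k*n. kv n a x y j) = real (k*n) * a"
proof -
  have n0: "n > 0" using assms by simp
  have "(\<Sum>j<k*n. kv n a x y j) = (\<Sum>j<k*n. a) + (\<Sum>j<k*n. x (j div n) * sf n 0 (j mod n))
      + (\<Sum>j<k*n. y (j div n) * sf n (- th n) (j mod n))"
    unfolding kv_def by (simp add: sum.distrib)
  also have "\<dots> = real (k*n) * a"
    unfolding sum_blocks[OF n0] sf_sum0[OF assms] by simp
  finally show ?thesis .
qed

lemma kv_rec: assumes n: "n \<ge> 3" and i: "i < k*n"
  shows "kv n a x y (nbp n i) + kv n a x y (nbm n i) - 2 * cos (th n) * kv n a x y i = (2 - 2 * cos (th n)) * a"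
proof -
  have n0: "n > 0" using n by simp
  have p: "i mod n < n" using n0 by simp
  note nb = nb_props[OF n i]
  have "kv n a x y (nbp n i) + kv n a x y (nbm n i) =
      2 * a + x (i div n) * (sf n 0 ((i mod n + 1) mod n) + sf n 0 ((i mod n + n - 1) mod n))
            + y (i div n) * (sf n (- th n) ((i mod n + 1) mod n) + sf n (- th n) ((i mod n + n - 1) mod n))"
    unfolding kv_def nb by (simp add: algebra_simps)
  also have "\<dots> = 2 * a + x (i div n) * (2 * cos (th n) * sf n 0 (i mod n))
            + y (i div n) * (2 * cos (th n) * sf n (- th n) (i mod n))"
    unfolding sf_rec[OF n p] ..
  finally show ?thesis unfolding kv_def by (simp add: algebra_simps)
qed

lemma ua_carrier: "universal_adj_mat N adj \<alpha> \<beta> \<gamma> \<delta> \<in> carrier_mat N N"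
  unfolding universal_adj_mat_def adjacency_mat_def all_ones_mat_def degree_mat_def by auto

lemma ua_entry: assumes "i < N" "j < N"
  shows "universal_adj_mat N adj \<alpha> \<beta> \<gamma> \<delta> $$ (i,j) = \<alpha> * (if adj i j then 1 else 0)
     + \<beta> * (if i = j then 1 else 0) + \<gamma> + \<delta> * (if i = j then real (degree N adj i) else 0)"
  unfolding universal_adj_mat_def adjacency_mat_def all_ones_mat_def degree_mat_def using assms by auto

lemma mult_entry: assumes A: "A \<in> carrier_mat N N" and i: "i < N"
  shows "(A *\<^sub>v vec N f) $ i = (\<Sum>j<N. A $$ (i,j) * f j)"
  using A i by (auto simp: scalar_prod_def atLeast0LessThan intro!: sum.cong)

lemma M0_kernel: assumes n: "n \<ge> 3" and k: "k \<ge> 1"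
  shows "universal_adj_mat (k*n) (kCn_adj k n) 1 (-2*cos (th n)) ((2*cos (th n) - 2)/real (k*n)) 0
    *\<^sub>v vec (k*n) (kv n a x y) = 0\<^sub>v (k*n)"
  (is "?M *\<^sub>v ?v = _")
proof (rule eq_vecI)
  have "?M \<in> carrier_mat (k*n) (k*n)" by (rule ua_carrier)
  then show "dim_vec (?M *\<^sub>v ?v) = dim_vec (0\<^sub>v (k*n))" by simp
  fix i assume "i < dim_vec (0\<^sub>v (k * n) :: real vec)"
  then have i: "i < k*n" by simp
  have N0: "real (k*n) > 0" using n k by simp
  let ?c = "cos (th n)"
  let ?g = "(2*?c - 2)/real (k*n)"
  let ?f = "kv n a x y"
  have "(?M *\<^sub>v ?v) $ i = (\<Sum>j<k*n. ?M $$ (i,j) * ?f j)" by (rule mult_entry[OF ua_carrier i])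
  also have "\<dots> = (\<Sum>j<k*n. (if kCn_adj k n i j then 1 else 0) * ?f j + (-2*?c) * ((if i = j then 1 else 0) * ?f j) + ?g * ?f j)"
    by (rule sum.cong, simp, subst ua_entry, use i in auto, auto simp: algebra_simps times_divide_eq_left diff_divide_distrib add_divide_distrib)
  also have "\<dots> = (\<Sum>j<k*n. (if kCn_adj k n i j then 1 else 0) * ?f j) + (-2*?c) * (\<Sum>j<k*n. (if i = j then 1 else 0) * ?f j) + ?g * (\<Sum>j<k*n. ?f j)"
    by (simp only: sum.distrib sum_distrib_left)
  also have "(\<Sum>j<k*n. (if i = j then 1 else 0) * ?f j) = ?f i"
  proof -
    have "(\<Sum>j<k*n. (if i = j then 1 else 0) * ?f j) = (\<Sum>j<k*n. if i = j then ?f j else 0)"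
      by (rule sum.cong) auto
    then show ?thesis using i by simp
  qed
  also have "(\<Sum>j<k*n. (if kCn_adj k n i j then 1 else 0) * ?f j) = ?f (nbp n i) + ?f (nbm n i)" by (rule sum_adj[OF n i])
  also have "(\<Sum>j<k*n. ?f j) = real (k*n) * a" by (rule kv_sum[OF n])
  finally have "(?M *\<^sub>v ?v) $ i = (?f (nbp n i) + ?f (nbm n i) - 2 * ?c * ?f i) + ?g * (real (k*n) * a)" by simp
  also have "\<dots> = (2 - 2 * ?c) * a + (2*?c - 2) * a" unfolding kv_rec[OF n i] using n k by simp
  finally show "(?M *\<^sub>v ?v) $ i = 0\<^sub>v (k*n) $ i" using i by (simp add: algebra_simps)
qed



lemma kv_at: assumes "n > 0" "r < n"
  shows "kv n a x y (b*n + r) = a + x b * sf n 0 r + y b * sf n (- th n) r"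
  unfolding kv_def using assms by simp

lemma kv_at0: assumes "n > 0" shows "kv n a x y (b*n) = a - y b * sin (th n)"
  using kv_at[OF assms assms, of a x y b] assms by (simp add: sf_def)

lemma kv_at1: assumes "n \<ge> 3" shows "kv n a x y (b*n+1) = a + x b * sin (th n)"
  using kv_at[of n 1 a x y b] assms by (simp add: sf_def)

lemma kv_at2: assumes "n \<ge> 3" shows "kv n a x y 2 = a + x 0 * (2 * sin (th n) * cos (th n)) + y 0 * sin (th n)"
proof -
  have e: "kv n a x y (0*n+2) = a + x 0 * sf n 0 2 + y 0 * sf n (- th n) 2" using kv_at[of n 2 a x y 0] assms by simp
  have s2: "sf n 0 2 = 2 * sin (th n) * cos (th n)" unfolding sf_def using sin_double[of "th n"] by (simp add: mult.commute)
  have "th n * real (2::nat) + - th n = th n" by simp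
  then have s3: "sf n (- th n) 2 = sin (th n)" unfolding sf_def by simp
  show ?thesis using e unfolding s2 s3 by (simp add: numeral_2_eq_2)
qed



context fixes n :: nat assumes n3: "n \<ge> 3"
begin

definition "sN = sin (th n)"
definition "cN = cos (th n)"
definition "a0 = 1 / (2 - 2 * cN)"
definition "x0 = - 1 / (sN * (2 - 2 * cN))"
definition "y0 = 1 / (sN * (2 - 2 * cN))"

definition famE :: "nat \<Rightarrow> real" where "famE = kv n a0 (\<lambda>b. x0) (\<lambda>b. y0)"
definition famA :: "nat \<Rightarrow> nat \<Rightarrow> real" where
  "famA b0 = (let e = (if b0 = 0 then 1 else 0) in
     kv n (e * a0) (\<lambda>b. e * x0) (\<lambda>b. (if b = b0 then - 1 / sN else 0) + e * y0))"
definition famB :: "nat \<Rightarrow> nat \<Rightarrow> real" where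
  "famB b0 = (let e = (if b0 = 0 then 1 else 0) in
     kv n (- e * 2 * cN * a0) (\<lambda>b. (if b = b0 then 1 / sN else 0) - e * 2 * cN * x0) (\<lambda>b. - e * 2 * cN * y0))"

lemma sN_nz: "sN \<noteq> 0" unfolding sN_def th_def using sin_pos[OF n3] by simp
lemma D_nz: "2 - 2 * cN \<noteq> 0" unfolding cN_def th_def using cos_lt1[OF n3] by simp
lemma n0: "n > 0" using n3 by simp

lemma rel1: "a0 - y0 * sN = 0" unfolding a0_def y0_def using sN_nz D_nz by (simp add: field_simps)
lemma rel2: "a0 + x0 * sN = 0" unfolding a0_def x0_def using sN_nz D_nz by (simp add: field_simps)
lemma rel3: "a0 + x0 * (2 * sN * cN) + y0 * sN = 1"
proof -
  have 1: "x0 * (2 * sN * cN) = - (2 * cN) / (2 - 2 * cN)" unfolding x0_def using sN_nz D_nz by (simp add: field_simps)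
  have 2: "y0 * sN = 1 / (2 - 2 * cN)" unfolding y0_def using sN_nz D_nz by (simp add: field_simps)
  show ?thesis unfolding 1 2 a0_def using D_nz by (simp add: field_simps)
qed

lemma famE_vals: "famE (b*n) = 0" "famE (b*n+1) = 0" "famE 2 = 1"
  unfolding famE_def kv_at0[OF n0] kv_at1[OF n3] kv_at2[OF n3] sN_def[symmetric] cN_def[symmetric]
  using rel1 rel2 rel3 by simp_all

lemma famA_vals: "famA b0 (b*n) = (if b = b0 then 1 else 0)" "famA b0 (b*n+1) = 0" "famA b0 2 = 0"
proof -
  define e :: real where "e = (if b0 = 0 then 1 else 0)"
  have f: "famA b0 = kv n (e * a0) (\<lambda>b. e * x0) (\<lambda>b. (if b = b0 then - 1 / sN else 0) + e * y0)"
    unfolding famA_def e_def Let_def ..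
  show "famA b0 (b*n) = (if b = b0 then 1 else 0)"
    unfolding f kv_at0[OF n0] sN_def[symmetric] using rel1 sN_nz
    by (cases "b = b0") (simp_all add: algebra_simps)
  show "famA b0 (b*n+1) = 0"
    unfolding f kv_at1[OF n3] sN_def[symmetric] using rel2 by (simp add: algebra_simps flip: distrib_left)
  show "famA b0 2 = 0"
    unfolding f kv_at2[OF n3] sN_def[symmetric] cN_def[symmetric] using rel3 sN_nz unfolding e_def
    by (cases "b0 = 0") (simp_all add: algebra_simps)
qed

lemma famB_vals: "famB b0 (b*n) = 0" "famB b0 (b*n+1) = (if b = b0 then 1 else 0)" "famB b0 2 = 0"
proof -
  define e :: real where "e = (if b0 = 0 then 1 else 0)"
  have f: "famB b0 = kv n (- e * 2 * cN * a0) (\<lambda>b. (if b = b0 then 1 / sN else 0) - e * 2 * cN * x0) (\<lambda>b. - e * 2 * cN * y0)"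
    unfolding famB_def e_def Let_def ..
  have r1: "- e * 2 * cN * a0 - - e * 2 * cN * y0 * sN = - e * 2 * cN * (a0 - y0 * sN)" by (simp add: algebra_simps)
  show "famB b0 (b*n) = 0"
    unfolding f kv_at0[OF n0] sN_def[symmetric] r1 rel1 by simp
  show "famB b0 (b*n+1) = (if b = b0 then 1 else 0)"
  proof -
    have "famB b0 (b*n+1) = - e * 2 * cN * a0 + ((if b = b0 then 1 / sN else 0) - e * 2 * cN * x0) * sN"
      unfolding f kv_at1[OF n3] sN_def[symmetric] ..
    also have "\<dots> = (if b = b0 then 1 / sN else 0) * sN - e * 2 * cN * (a0 + x0 * sN)" by (simp add: algebra_simps)
    also have "\<dots> = (if b = b0 then 1 else 0)" unfolding rel2 using sN_nz by simp
    finally show ?thesis .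
  qed
  show "famB b0 2 = 0"
  proof -
    have "famB b0 2 = - e * 2 * cN * a0 + ((if 0 = b0 then 1 / sN else 0) - e * 2 * cN * x0) * (2 * sN * cN) + (- e * 2 * cN * y0) * sN"
      unfolding f kv_at2[OF n3] sN_def[symmetric] cN_def[symmetric] ..
    also have "\<dots> = (if 0 = b0 then 1 / sN else 0) * (2 * sN * cN) - e * 2 * cN * (a0 + x0 * (2 * sN * cN) + y0 * sN)"
      by (simp add: algebra_simps)
    also have "\<dots> = 0" unfolding rel3 e_def using sN_nz by simp
    finally show ?thesis .
  qed
qed

end



context fixes n :: nat assumes n3: "n \<ge> 3"
begin

definition wf :: "nat \<Rightarrow> nat \<Rightarrow> real" where
  "wf c = (if c mod n = 0 then famA n (c div n) else if c mod n = 1 then famB n (c div n) else famE n)"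

definition Eset :: "nat \<Rightarrow> nat set" where
  "Eset k = (\<lambda>b. b*n) ` {..<k} \<union> (\<lambda>b. b*n+1) ` {..<k} \<union> {2}"

lemma n0': "n > 0" using n3 by simp
lemma m1: "(b*n+1) mod n = 1" "(b*n+1) div n = b"
proof -
  have "(1 + b*n) mod n = 1 mod n" by (rule mod_mult_self1)
  then show "(b*n+1) mod n = 1" using n3 by (simp add: add.commute)
  have "(1 + b*n) div n = b + 1 div n" using n3 by (intro div_mult_self1, auto)
  then show "(b*n+1) div n = b" using n3 by (simp add: add.commute)
qed
lemma m0: "(b*n) mod n = 0" "(b*n) div n = b" using n3 by auto
lemma m2: "(2::nat) mod n = 2" using n3 by auto

lemma wf_A: "wf (b*n) = famA n b" unfolding wf_def m0 by simp
lemma wf_B: "wf (b*n+1) = famB n b" unfolding wf_def m1 by simp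
lemma wf_E: "wf 2 = famE n" unfolding wf_def m2 by simp

lemma ne1: "b*n \<noteq> b'*n+1"
proof
  assume "b*n = b'*n+1" then have "(b*n) mod n = (b'*n+1) mod n" by simp
  then show False unfolding m0 m1 by simp
qed
lemma ne2: "b*n \<noteq> 2"
proof
  assume "b*n = 2" then have "(b*n) mod n = 2 mod n" by simp
  then show False unfolding m0 m2 by simp
qed
lemma ne3: "b*n + 1 \<noteq> 2"
proof
  assume "b*n+1 = 2" then have "(b*n+1) mod n = 2 mod n" by simp
  then show False unfolding m1 m2 by simp
qed

lemma wf_vals: assumes "c \<in> Eset k" "c' \<in> Eset k" shows "wf c c' = (if c' = c then 1 else 0)"
proof -
  have inj0: "b*n = b'*n \<longleftrightarrow> b = b'" for b b' using n0' by simp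
  have inj1: "b*n+1 = b'*n+1 \<longleftrightarrow> b = b'" for b b' using n0' by simp
  from assms(1) consider (A) b0 where "c = b0*n" | (B) b0 where "c = b0*n+1" | (E) "c = 2" unfolding Eset_def by auto
  then show ?thesis
  proof cases
    case A
    from assms(2) consider (A') b where "c' = b*n" | (B') b where "c' = b*n+1" | (E') "c' = 2" unfolding Eset_def by auto
    then show ?thesis
      by cases (auto simp: A wf_A famA_vals[OF n3] famA_vals[OF n3, simplified] inj0 ne1 ne1[simplified] ne2 n0' dest: sym)
  next
    case B
    from assms(2) consider (A') b where "c' = b*n" | (B') b where "c' = b*n+1" | (E') "c' = 2" unfolding Eset_def by auto
    then show ?thesis
      by cases (auto simp: B wf_B wf_B[simplified] famB_vals[OF n3] famB_vals[OF n3, simplified] inj1 ne1 ne1[simplified] ne3 ne3[simplified] n0' dest: sym)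
  next
    case E
    from assms(2) consider (A') b where "c' = b*n" | (B') b where "c' = b*n+1" | (E') "c' = 2" unfolding Eset_def by auto
    then show ?thesis
      by cases (auto simp: E wf_E famE_vals[OF n3] famE_vals[OF n3, simplified] ne2 ne3 ne3[simplified] n0')
  qed
qed

lemma wf_kv: "\<exists>a x y. wf c = kv n a x y"
  unfolding wf_def famA_def[OF n3] famB_def[OF n3] famE_def[OF n3] Let_def by auto

lemma card_Eset: "card (Eset k) = 2*k+1"
proof -
  have i0: "inj_on (\<lambda>b. b*n) {..<k}" using n0' by (auto intro: inj_onI)
  have i1: "inj_on (\<lambda>b. b*n+1) {..<k}" using n0' by (auto intro: inj_onI)
  have d1: "(\<lambda>b. b*n) ` {..<k} \<inter> (\<lambda>b. b*n+1) ` {..<k} = {}" using ne1 by (metis (no_types, lifting) disjoint_iff imageE)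
  have d2: "((\<lambda>b. b*n) ` {..<k} \<union> (\<lambda>b. b*n+1) ` {..<k}) \<inter> {2} = {}" using ne2 ne3 by (metis (no_types, lifting) Int_insert_right_if0 UnE imageE inf_bot_right)
  have "card (Eset k) = card ((\<lambda>b. b*n) ` {..<k} \<union> (\<lambda>b. b*n+1) ` {..<k}) + card {2::nat}"
    unfolding Eset_def by (rule card_Un_disjoint, simp, simp, rule d2)
  also have "card ((\<lambda>b. b*n) ` {..<k} \<union> (\<lambda>b. b*n+1) ` {..<k}) = k + k"
    using card_Un_disjoint[OF _ _ d1] card_image[OF i0] card_image[OF i1] by simp
  finally show ?thesis by simp
qed

lemma Eset_sub: assumes "k \<ge> 1" shows "Eset k \<subseteq> {..<k*n}"
proof -
  have "b*n < k*n" if "b < k" for b using lt_block[OF that n0'] by simp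
  moreover have "b*n+1 < k*n" if "b < k" for b using lt_block[OF that, of 1 n] n3 by simp
  moreover have "2 < k*n"
  proof -
    have "1*3 \<le> k*n" using assms n3 by (rule mult_le_mono)
    then show ?thesis by simp
  qed
  ultimately show ?thesis unfolding Eset_def by auto
qed

lemma upper: assumes k: "k \<ge> 1"
  shows "vec_space.rank (k*n) (universal_adj_mat (k*n) (kCn_adj k n) 1 (-2*cos (th n)) ((2*cos (th n) - 2)/real (k*n)) 0)
     \<le> k*n - (2*k+1)"
proof -
  let ?M = "universal_adj_mat (k*n) (kCn_adj k n) 1 (-2*cos (th n)) ((2*cos (th n) - 2)/real (k*n)) 0"
  have "vec_space.rank (k*n) ?M \<le> k*n - card (Eset k)"
  proof (rule vec_space.rank_le_kernel_elim[OF ua_carrier Eset_sub[OF k], where w = "\<lambda>c. vec (k*n) (wf c)"])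
    fix c assume c: "c \<in> Eset k"
    obtain a x y where w: "wf c = kv n a x y" using wf_kv by blast
    have ker: "?M *\<^sub>v vec (k*n) (wf c) = 0\<^sub>v (k*n)" unfolding w by (rule M0_kernel[OF n3 k])
    have "c < k*n" using c Eset_sub[OF k] by auto
    moreover have "\<forall>c'\<in>Eset k. c' < k*n" using Eset_sub[OF k] by auto
    ultimately show "vec (k*n) (wf c) \<in> carrier_vec (k*n) \<and> ?M *\<^sub>v vec (k*n) (wf c) = 0\<^sub>v (k*n) \<and>
        vec (k*n) (wf c) $ c = 1 \<and> (\<forall>c'\<in>Eset k. c' \<noteq> c \<longrightarrow> vec (k*n) (wf c) $ c' = 0)"
      using ker wf_vals[OF c] c by auto
  qed
  then show ?thesis unfolding card_Eset .
qed

end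



lemma (in vec_space) rank_ge_sub_cols:
  assumes B: "B \<in> carrier_mat n nb" and X: "X \<in> carrier_mat n m"
  and sub: "set (cols X) \<subseteq> set (cols B)" and dist: "distinct (cols X)"
  and ker: "\<And>v. v \<in> carrier_vec m \<Longrightarrow> X *\<^sub>v v = 0\<^sub>v n \<Longrightarrow> v = 0\<^sub>v m"
  shows "m \<le> rank B"
proof -
  have li: "lin_indpt (set (cols X))"
  proof
    assume "lin_dep (set (cols X))"
    then obtain v where "v \<in> carrier_vec m" "v \<noteq> 0\<^sub>v m" "X *\<^sub>v v = 0\<^sub>v n"
      using lin_depE[OF X _ dist] by blast
    then show False using ker by auto
  qed
  have "card (set (cols X)) \<le> rank B" by (rule rank_ge_card_indpt[OF B sub li])
  moreover have "card (set (cols X)) = m" using distinct_card[OF dist] X by simp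
  ultimately show ?thesis by simp
qed

lemma dm: assumes "r < (n::nat)" shows "(b*n + r) div n = b" "(b*n + r) mod n = r"
proof -
  have n0: "n \<noteq> 0" using assms by auto
  have "(b*n + r) div n = (r + b*n) div n" by (simp only: add.commute)
  also have "\<dots> = b + r div n" using n0 by (rule div_mult_self1)
  finally show "(b*n + r) div n = b" using assms by simp
  have "(b*n + r) mod n = (r + b*n) mod n" by (simp only: add.commute)
  also have "\<dots> = r mod n" by (rule mod_mult_self1)
  finally show "(b*n + r) mod n = r" using assms by simp
qed

context fixes n :: nat assumes n3: "n \<ge> 3"
begin

definition fX :: "nat \<Rightarrow> nat" where "fX j = (j div (n-2))*n + j mod (n-2) + 1"

lemma d0: "n - 2 > 0" using n3 by simp

lemma fX_props: assumes j: "j < k*(n-2)"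
  shows "fX j < k*n" "fX j div n = j div (n-2)" "fX j mod n = j mod (n-2) + 1"
    "fX j - 1 < k*n" "(fX j - 1) div n = j div (n-2)" "(fX j - 1) mod n = j mod (n-2)"
    "fX j - 1 = (j div (n-2))*n + j mod (n-2)"
proof -
  have b: "j div (n-2) < k" using j d0 by (simp add: div_less_iff_less_mult mult.commute)
  have r: "j mod (n-2) + 1 < n" using mod_less_divisor[OF d0, of j] n3 by arith
  show "fX j < k*n" unfolding fX_def using lt_block[OF b r] by simp
  have e: "fX j = (j div (n-2))*n + (j mod (n-2) + 1)" unfolding fX_def by simp
  show "fX j div n = j div (n-2)" "fX j mod n = j mod (n-2) + 1" unfolding e using dm[OF r] by simp_all
  show "fX j - 1 = (j div (n-2))*n + j mod (n-2)" unfolding fX_def by simp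
  then show "fX j - 1 < k*n" "(fX j - 1) div n = j div (n-2)" "(fX j - 1) mod n = j mod (n-2)"
    using lt_block[OF b, of "j mod (n-2)" n] r dm[of "j mod (n-2)" n "j div (n-2)"] by simp_all
qed

lemma fX_mono: assumes "j < j'" shows "fX j < fX j'"
proof (cases "j div (n-2) = j' div (n-2)")
  case True
  then have e: "(j' div (n-2))*(n-2) = (j div (n-2))*(n-2)" by simp
  have "j mod (n-2) < j' mod (n-2)" using assms e div_mult_mod_eq[of j "n-2"] div_mult_mod_eq[of j' "n-2"] by linarith
  then show ?thesis unfolding fX_def using True by simp
next
  case False
  then have lt: "j div (n-2) < j' div (n-2)" using assms div_le_mono[of j j' "n-2"] by simp
  have r: "j mod (n-2) + 1 < n" using mod_less_divisor[OF d0, of j] n3 by arith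
  have "fX j < (j div (n-2) + 1) * n" unfolding fX_def using r by simp
  also have "\<dots> \<le> (j' div (n-2)) * n" using lt by (intro mult_right_mono, auto)
  also have "\<dots> < fX j'" unfolding fX_def by simp
  finally show ?thesis .
qed

lemma adj_row: assumes j: "j < k*(n-2)" and j': "j' < k*(n-2)" and le: "j \<le> j'"
  shows "kCn_adj k n (fX j - 1) (fX j') \<longleftrightarrow> j' = j"
proof -
  note P = fX_props[OF j] and P' = fX_props[OF j']
  let ?r = "fX j - 1"
  have r: "j mod (n-2) + 1 < n" using mod_less_divisor[OF d0, of j] n3 by arith
  have "nbp n ?r = fX j" unfolding nbp_def P(5) P(6) fX_def using r by simp
  moreover have "nbm n ?r \<noteq> fX j'"
  proof (cases "j mod (n-2) = 0")
    case True
    then have "(j mod (n-2) + n - 1) mod n = n - 1" using n3 by simp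
    then have "nbm n ?r mod n = n - 1" unfolding nbm_def P(5) P(6) using n3 dm[of "n-1" n "j div (n-2)"] by simp
    moreover have "fX j' mod n \<noteq> n - 1" unfolding P'(3) using mod_less_divisor[OF d0, of j'] n3 by arith
    ultimately show ?thesis by metis
  next
    case False
    then have "nbm n ?r = (j div (n-2))*n + (j mod (n-2) - 1)"
    proof -
      have "j mod (n-2) + n - 1 = (j mod (n-2) - 1) + n" using False by simp
      then have "(j mod (n-2) + n - 1) mod n = ((j mod (n-2) - 1) + n) mod n" by (simp only:)
      also have "\<dots> = (j mod (n-2) - 1) mod n" by (simp only: mod_add_self2)
      also have "\<dots> = j mod (n-2) - 1" using r by simp
      finally show ?thesis unfolding nbm_def P(5) P(6) by simp
    qed
    also have "\<dots> < fX j" unfolding fX_def using False by simp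
    also have "\<dots> \<le> fX j'" using le fX_mono by (cases "j = j'") (auto simp: less_imp_le)
    finally show ?thesis by simp
  qed
  moreover have "fX j' = fX j \<longleftrightarrow> j' = j" using fX_mono by (metis nat_neq_iff)
  ultimately show ?thesis unfolding adj_iff[OF n3 P(4) P'(1)] by auto
qed

lemma U0_entry: assumes j: "j < k*(n-2)" and j': "j' < k*(n-2)" and le: "j \<le> j'"
  shows "universal_adj_mat (k*n) (kCn_adj k n) \<alpha> \<beta> 0 \<delta> $$ (fX j - 1, fX j') = (if j' = j then \<alpha> else 0)"
proof -
  have ne: "fX j - 1 \<noteq> fX j'"
  proof -
    have "fX j \<le> fX j'" using le fX_mono by (cases "j = j'") (auto simp: less_imp_le)
    moreover have "fX j > 0" unfolding fX_def by simp
    ultimately show ?thesis by simp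
  qed
  show ?thesis
    using ua_entry[OF fX_props(4)[OF j] fX_props(1)[OF j']] adj_row[OF j j' le] ne by simp
qed

lemma lower0: assumes a: "\<alpha> \<noteq> 0"
  shows "k*(n-2) \<le> vec_space.rank (k*n) (universal_adj_mat (k*n) (kCn_adj k n) \<alpha> \<beta> 0 \<delta>)"
proof -
  let ?U = "universal_adj_mat (k*n) (kCn_adj k n) \<alpha> \<beta> 0 \<delta>"
  let ?m = "k*(n-2)"
  define X where "X = mat (k*n) ?m (\<lambda>(i,j). ?U $$ (i, fX j))"
  have X: "X \<in> carrier_mat (k*n) ?m" unfolding X_def by simp
  have Uc: "?U \<in> carrier_mat (k*n) (k*n)" by (rule ua_carrier)
  have colX: "col X j = col ?U (fX j)" if "j < ?m" for j
    unfolding X_def using that fX_props(1)[OF that] Uc by (auto intro!: eq_vecI simp: col_def)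
  have sub: "set (cols X) \<subseteq> set (cols ?U)"
  proof
    fix x assume "x \<in> set (cols X)"
    then obtain j where j: "j < ?m" "x = col X j" using X by (auto simp: in_set_conv_nth)
    have "col ?U (fX j) \<in> set (cols ?U)" using fX_props(1)[OF j(1)] ua_carrier[of "k*n"]
      by (metis cols_length cols_nth carrier_matD(2) nth_mem)
    then show "x \<in> set (cols ?U)" using j colX by simp
  qed
  have Xe: "X $$ (fX j - 1, j') = (if j' = j then \<alpha> else 0)" if "j < ?m" "j' < ?m" "j \<le> j'" for j j'
    unfolding X_def using that fX_props(4)[OF that(1)] U0_entry[OF that] by simp
  have dist: "distinct (cols X)"
  proof (rule distinct_conv_nth[THEN iffD2], intro allI impI)
    fix i j assume i: "i < length (cols X)" and j: "j < length (cols X)" and ij: "i \<noteq> j"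
    have i': "i < ?m" and j': "j < ?m" using i j X by auto
    have ne: "col X p \<noteq> col X q" if "p < ?m" "q < ?m" "p < q" for p q
    proof
      assume "col X p = col X q"
      then have "col X p $ (fX p - 1) = col X q $ (fX p - 1)" by simp
      then have "X $$ (fX p - 1, p) = X $$ (fX p - 1, q)" using that X fX_props(4)[OF that(1)] by simp
      then show False using Xe[OF that(1) that(1)] Xe[OF that(1) that(2)] that a by simp
    qed
    show "cols X ! i \<noteq> cols X ! j" using i' j' ij X ne
      by (cases "i < j") (auto simp: nat_neq_iff dest: sym)
  qed
  have ker: "v = 0\<^sub>v ?m" if v: "v \<in> carrier_vec ?m" and Xv: "X *\<^sub>v v = 0\<^sub>v (k*n)" for v
  proof -
    have "v $ j = 0" if "j < ?m" for j
      using that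
    proof (induction j rule: less_induct)
      case (less j)
      have "0 = (X *\<^sub>v v) $ (fX j - 1)" using Xv fX_props(4)[OF less.prems] by simp
      also have "\<dots> = (\<Sum>j'<?m. X $$ (fX j - 1, j') * v $ j')"
        using X v fX_props(4)[OF less.prems] by (auto simp: scalar_prod_def atLeast0LessThan intro!: sum.cong)
      also have "\<dots> = (\<Sum>j'<?m. if j' = j then \<alpha> * v $ j else 0)"
      proof (rule sum.cong)
        fix j' assume "j' \<in> {..<?m}"
        then have j': "j' < ?m" by simp
        show "X $$ (fX j - 1, j') * v $ j' = (if j' = j then \<alpha> * v $ j else 0)"
        proof (cases "j' < j")
          case True then show ?thesis using less.IH[OF True] j' by simp
        next
          case False then show ?thesis using Xe[OF less.prems j'] by simp
        qed
      qed simp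
      also have "\<dots> = \<alpha> * v $ j" using less.prems by simp
      finally show ?case using a by simp
    qed
    then show ?thesis using v by (intro eq_vecI) auto
  qed
  show ?thesis by (rule vec_space.rank_ge_sub_cols[OF ua_carrier X sub dist ker])
qed

end



lemma lower: assumes n3: "n \<ge> 3" and a: "\<alpha> \<noteq> 0"
  shows "k*(n-2) \<le> vec_space.rank (k*n) (universal_adj_mat (k*n) (kCn_adj k n) \<alpha> \<beta> \<gamma> \<delta>) + 1"
proof -
  let ?N = "k*n"
  let ?U = "universal_adj_mat ?N (kCn_adj k n) \<alpha> \<beta> \<gamma> \<delta>"
  let ?V = "universal_adj_mat ?N (kCn_adj k n) \<alpha> \<beta> 0 \<delta>"
  let ?J = "(- \<gamma>) \<cdot>\<^sub>m all_ones_mat ?N"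
  have Uc: "?U \<in> carrier_mat ?N ?N" by (rule ua_carrier)
  have Jc: "?J \<in> carrier_mat ?N ?N" unfolding all_ones_mat_def by simp
  have Vc: "?V \<in> carrier_mat ?N ?N" by (rule ua_carrier)
  have eq: "?V = ?U + ?J"
  proof (rule eq_matI)
    fix i j assume "i < dim_row (?U + ?J)" "j < dim_col (?U + ?J)"
    then have i: "i < ?N" and j: "j < ?N" using Uc Jc by auto
    have 1: "(?U + ?J) $$ (i,j) = ?U $$ (i,j) + ?J $$ (i,j)" using Jc i j by (intro index_add_mat(1)) auto
    have 2: "?J $$ (i,j) = - \<gamma>" using i j unfolding all_ones_mat_def by simp
    show "?V $$ (i, j) = (?U + ?J) $$ (i, j)"
      unfolding 1 2 ua_entry[OF i j] by simp
  qed (use Uc Jc Vc in \<open>auto simp: all_ones_mat_def\<close>)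
  have "vec_space.rank ?N ?V \<le> vec_space.rank ?N ?U + vec_space.rank ?N ?J"
    unfolding eq by (rule vec_space.rank_subadditive[OF Uc Jc])
  moreover have "vec_space.rank ?N ?J \<le> 1"
    by (rule vec_space.rank_le_1_product_entries[OF Jc, where f = "\<lambda>_. - \<gamma>" and g = "\<lambda>_. 1"])
      (use Jc in \<open>auto simp: all_ones_mat_def\<close>)
  moreover have "k*(n-2) \<le> vec_space.rank ?N ?V" by (rule lower0[OF n3 a])
  ultimately show ?thesis by linarith
qed

theorem corollary12:
  fixes n k :: nat
  assumes "n \<ge> 3" and "k \<ge> 1"
  shows "int (mur (k * n) (kCn_adj k n)) = int k * int n - 2 * int k - 1"
proof -
  have n3: "n \<ge> 3" and k: "k \<ge> 1" using assms by auto
  define r0 where "r0 = k*n - (2*k+1)"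
  have kn: "k*(n-2) = k*n - 2*k" by (simp add: diff_mult_distrib2)
  have big: "2*k+1 \<le> k*n"
  proof -
    have "k*3 \<le> k*n" using n3 by simp
    then show ?thesis using k by linarith
  qed
  have r0': "r0 = k*(n-2) - 1" unfolding r0_def kn by simp
  have low: "r0 \<le> vec_space.rank (k*n) (universal_adj_mat (k*n) (kCn_adj k n) \<alpha> \<beta> \<gamma> \<delta>)" if "\<alpha> \<noteq> 0" for \<alpha> \<beta> \<gamma> \<delta>
    using lower[OF n3 that, of k \<beta> \<gamma> \<delta>] unfolding r0' by linarith
  have "mur (k*n) (kCn_adj k n) = r0"
    unfolding mur_def
  proof (rule Least_equality)
    let ?M = "universal_adj_mat (k*n) (kCn_adj k n) 1 (-2*cos (th n)) ((2*cos (th n) - 2)/real (k*n)) 0"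
    have "vec_space.rank (k*n) ?M \<le> r0" unfolding r0_def by (rule upper[OF n3 k])
    moreover have "r0 \<le> vec_space.rank (k*n) ?M" by (rule low) simp
    ultimately show "\<exists>\<alpha> \<beta> \<gamma> \<delta>. \<alpha> \<noteq> 0 \<and> vec_space.rank (k*n) (universal_adj_mat (k*n) (kCn_adj k n) \<alpha> \<beta> \<gamma> \<delta>) = r0"
      by (intro exI[of _ 1] exI[of _ "-2*cos (th n)"] exI[of _ "(2*cos (th n) - 2)/real (k*n)"] exI[of _ 0]) simp
  next
    fix y assume "\<exists>\<alpha> \<beta> \<gamma> \<delta>. \<alpha> \<noteq> 0 \<and> vec_space.rank (k*n) (universal_adj_mat (k*n) (kCn_adj k n) \<alpha> \<beta> \<gamma> \<delta>) = y"
    then show "r0 \<le> y" using low by blast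
  qed
  then show ?thesis unfolding r0_def using big by (simp add: of_nat_diff)
qed


end
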